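(* For any $n\in\mathbb{R}^+$, $f\in D_{HK}$, $\phi\in\mathcal{D}(a,b)$ and any nonnegative integer $j$, $$\langle D^{j}(\mathcal{J}_a^{n}f),\phi\rangle=\langle D^{j}f,\mathcal{J}_{b_-}^n\phi\rangle.$$
   Context: Fix real numbers $a<b$. $\mathcal{D}(a,b)$ is the space of real $C^\infty$ functions with compact support in $(a,b)$, $\mathcal{D}'(a,b)$ the distributions on $(a,b)$, $\langle T,\psi\rangle$ the pairing (for $T\in D_{HK}$ and $\psi$ of bounded variation, $\langle T,\psi\rangle=\int_a^b T\psi$), $D$ the distributional derivative, $D^j$ its $j$-fold iterate, $D^0=I$. Let $C_0=\{F\in C[a,b]:F(a)=0\}$. A distribution $f$ is Henstock–Kurzweil integrable if $f=DF$ for some (unique) $F\in C_0$; $\int_c^d f=F(d)-F(c)$. $D_{HK}$ is the space of these with the Alexiewicz norm $\|f\|_A=\sup_{[a,b]}|F|$; $L^1[a,b]$ is dense in it. Left Riemann–Liouville integral: for $n\ge1$, $\mathcal{J}_a^nf(x)=\frac{1}{\Gamma(n)}\int_a^x(x-t)^{n-1}f(t)\,dt$; for $0<n<1$, $\mathcal{J}_a^nf(x)=\frac{1}{\Gamma(n)}\lim_{k}\int_a^x(x-t)^{n-1}f_k(t)\,dt$ with $(f_k)\subset L^1[a,b]$, $\|f_k-f\|_A\to0$. Right-sided Riemann–Liouville integral: for $n\ge1$, $\mathcal{J}_{b_-}^nf(x)=\frac{1}{\Gamma(n)}\int_x^b(t-x)^{n-1}f(t)\,dt$; for $0<n<1$,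 $\mathcal{J}_{b_-}^nf(x)=\frac{1}{\Gamma(n)}\lim_{k}\int_x^b(t-x)^{n-1}f_k(t)\,dt$ with $(f_k)$ as before; $\mathcal{J}_{b_-}^0=I$. *)

theory Defs
  imports "HOL-Analysis.Analysis"
begin

definition test_fun :: "real \<Rightarrow> real \<Rightarrow> (real \<Rightarrow> real) \<Rightarrow> bool" where
  "test_fun a b \<phi> \<longleftrightarrow>
     (\<forall>k x. (deriv ^^ k) \<phi> differentiable (at x)) \<and>
     (\<exists>c d. a < c \<and> d < b \<and> (\<forall>x. x \<notin> {c..d} \<longrightarrow> \<phi> x = 0))"

type_synonym distr = "(real \<Rightarrow> real) \<Rightarrow> real"

definition dist_deriv :: "nat \<Rightarrow> distr \<Rightarrow> distr" where
  "dist_deriv j T = (\<lambda>\<phi>. (-1) ^ j * T ((deriv ^^ j) \<phi>))"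

definition regular_dist :: "real \<Rightarrow> real \<Rightarrow> (real \<Rightarrow> real) \<Rightarrow> distr" where
  "regular_dist a b g = (\<lambda>\<phi>. integral {a..b} (\<lambda>x. g x * \<phi> x))"

text \<open>The HK integrable distribution f = DF given by its primitive F in C_0:
  pairing with phi is -integral of F times phi'.\<close>
definition hk_dist :: "real \<Rightarrow> real \<Rightarrow> (real \<Rightarrow> real) \<Rightarrow> distr" where
  "hk_dist a b F = (\<lambda>\<phi>. - integral {a..b} (\<lambda>x. F x * deriv \<phi> x))"

definition rs_has_integral :: "(real \<Rightarrow> real) \<Rightarrow> (real \<Rightarrow> real) \<Rightarrow> real \<Rightarrow> real \<Rightarrow> real \<Rightarrow> bool" where
  "rs_has_integral F g c d I \<longleftrightarrow>
     (\<forall>e>0. \<exists>\<delta>>0. \<forall>p. p tagged_division_of {c..d} \<and> (\<lambda>x. ball x \<delta>) fine p \<longrightarrow>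
        \<bar>(\<Sum>(x,K)\<in>p. F x * (g (Sup K) - g (Inf K))) - I\<bar> < e)"

definition rs_integral :: "(real \<Rightarrow> real) \<Rightarrow> (real \<Rightarrow> real) \<Rightarrow> real \<Rightarrow> real \<Rightarrow> real" where
  "rs_integral F g c d = (THE I. rs_has_integral F g c d I)"

text \<open>HK integral over [c,d] of f = DF times a function g of bounded variation,
  defined by integration by parts: F(d)g(d) - F(c)g(c) - (RS) integral of F dg.\<close>
definition hk_int :: "real \<Rightarrow> real \<Rightarrow> (real \<Rightarrow> real) \<Rightarrow> (real \<Rightarrow> real) \<Rightarrow> real" where
  "hk_int c d F g = F d * g d - F c * g c - rs_integral F g c d"

definition rl_kernel :: "real \<Rightarrow> real \<Rightarrow> real" where
  "rl_kernel n s = (if n = 1 then 1 else s powr (n - 1))"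

definition RL_left_pt :: "real \<Rightarrow> real \<Rightarrow> (real \<Rightarrow> real) \<Rightarrow> real \<Rightarrow> real" where
  "RL_left_pt a n F x = (1 / Gamma n) * hk_int a x F (\<lambda>t. rl_kernel n (x - t))"

definition RL_left_L1 :: "real \<Rightarrow> real \<Rightarrow> (real \<Rightarrow> real) \<Rightarrow> real \<Rightarrow> real" where
  "RL_left_L1 a n h x = (1 / Gamma n) * integral {a..x} (\<lambda>t. rl_kernel n (x - t) * h t)"

definition A_dist :: "real \<Rightarrow> real \<Rightarrow> (real \<Rightarrow> real) \<Rightarrow> (real \<Rightarrow> real) \<Rightarrow> real" where
  "A_dist a b h F = (SUP x\<in>{a..b}. \<bar>integral {a..x} h - F x\<bar>)"

text \<open>Left RL integral, 0 < n < 1, of f = DF: the element of D_HK (given by its primitive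
  G in C_0, extended by 0 outside [a,b]) that is the Alexiewicz limit of the RL integrals
  of any L^1 sequence converging to f in the Alexiewicz norm.\<close>
definition RL_left_frac_prim :: "real \<Rightarrow> real \<Rightarrow> real \<Rightarrow> (real \<Rightarrow> real) \<Rightarrow> (real \<Rightarrow> real)" where
  "RL_left_frac_prim a b n F = (THE G. continuous_on {a..b} G \<and> G a = 0 \<and>
      (\<forall>x. x \<notin> {a..b} \<longrightarrow> G x = 0) \<and>
      (\<forall>fs :: nat \<Rightarrow> real \<Rightarrow> real.
         (\<forall>k. fs k absolutely_integrable_on {a..b}) \<and> (\<lambda>k. A_dist a b (fs k) F) \<longlonglongrightarrow> 0
         \<longrightarrow> (\<lambda>k. A_dist a b (RL_left_L1 a n (fs k)) G) \<longlonglongrightarrow> 0))"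

definition RL_left :: "real \<Rightarrow> real \<Rightarrow> real \<Rightarrow> (real \<Rightarrow> real) \<Rightarrow> distr" where
  "RL_left a b n F = (if 1 \<le> n then regular_dist a b (RL_left_pt a n F)
                      else hk_dist a b (RL_left_frac_prim a b n F))"

definition RL_right :: "real \<Rightarrow> real \<Rightarrow> (real \<Rightarrow> real) \<Rightarrow> real \<Rightarrow> real" where
  "RL_right b n \<phi> x = (1 / Gamma n) * integral {x..b} (\<lambda>t. rl_kernel n (t - x) * \<phi> t)"

end

theory Submission
  imports Defs
begin

lemma rs_unique:
  assumes I: "rs_has_integral F g c d I" and J: "rs_has_integral F g c d J"
  shows "I = J"
proof (rule ccontr)
  assume ne: "I \<noteq> J"
  define e where "e = \<bar>I - J\<bar> / 2"
  have e: "e > 0" using ne by (simp add: e_def)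
  obtain d1 where d1: "d1 > 0" and h1: "\<And>p. p tagged_division_of {c..d} \<and> (\<lambda>x. ball x d1) fine p \<Longrightarrow>
        \<bar>(\<Sum>(x,K)\<in>p. F x * (g (Sup K) - g (Inf K))) - I\<bar> < e"
    using I e unfolding rs_has_integral_def by meson
  obtain d2 where d2: "d2 > 0" and h2: "\<And>p. p tagged_division_of {c..d} \<and> (\<lambda>x. ball x d2) fine p \<Longrightarrow>
        \<bar>(\<Sum>(x,K)\<in>p. F x * (g (Sup K) - g (Inf K))) - J\<bar> < e"
    using J e unfolding rs_has_integral_def by meson
  have "gauge (\<lambda>x. ball x (min d1 d2))" using d1 d2 by (simp add: gauge_ball)
  then obtain p where p: "p tagged_division_of cbox c d" "(\<lambda>x. ball x (min d1 d2)) fine p"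
    using fine_division_exists by blast
  have f1: "(\<lambda>x. ball x d1) fine p" "(\<lambda>x. ball x d2) fine p"
    using p(2) by (simp_all add: ball_min_Int fine_Int)
  have "\<bar>(\<Sum>(x,K)\<in>p. F x * (g (Sup K) - g (Inf K))) - I\<bar> < e"
    using h1 p f1 by auto
  moreover have "\<bar>(\<Sum>(x,K)\<in>p. F x * (g (Sup K) - g (Inf K))) - J\<bar> < e"
    using h2 p f1 by auto
  ultimately have "\<bar>I - J\<bar> < 2 * e"
    by (smt (verit, best) abs_triangle_ineq4 minus_diff_eq)
  then show False unfolding e_def by simp
qed

lemma rs_integral_eq: "rs_has_integral F g c d I \<Longrightarrow> rs_integral F g c d = I"
  unfolding rs_integral_def using rs_unique by blast

lemma cont_absint_mult:
  fixes f g :: "real \<Rightarrow> real"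
  assumes "continuous_on {p..q} f" "g absolutely_integrable_on {p..q}"
  shows "(\<lambda>x. f x * g x) absolutely_integrable_on {p..q}"
proof (rule absolutely_integrable_bounded_measurable_product_real)
  show "f \<in> borel_measurable (lebesgue_on {p..q})"
    using assms(1) by (simp add: continuous_imp_measurable_on_sets_lebesgue)
  show "bounded (f ` {p..q})"
    using assms(1) compact_Icc compact_continuous_image compact_imp_bounded by blast
qed (use assms in auto)

lemma rs_has_integral_deriv:
  fixes F g g' :: "real \<Rightarrow> real"
  assumes uv: "u \<le> v" and F: "continuous_on {u..v} F"
    and g': "g' absolutely_integrable_on {u..v}"
    and FTC: "\<And>p q. u \<le> p \<Longrightarrow> p \<le> q \<Longrightarrow> q \<le> v \<Longrightarrow> (g' has_integral (g q - g p)) {p..q}"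
  shows "rs_has_integral F g u v (integral {u..v} (\<lambda>t. F t * g' t))"
  unfolding rs_has_integral_def
proof (intro allI impI)
  fix e :: real assume e: "e > 0"
  define V where "V = integral {u..v} (\<lambda>t. \<bar>g' t\<bar>)"
  have ag: "(\<lambda>t. \<bar>g' t\<bar>) integrable_on {u..v}"
    using g' by (simp add: absolutely_integrable_on_def)
  have V0: "V \<ge> 0" unfolding V_def by (rule integral_nonneg[OF ag]) auto
  define \<eta> where "\<eta> = e / (V + 1)"
  have eta: "\<eta> > 0" using e V0 by (simp add: \<eta>_def)
  have uc: "uniformly_continuous_on {u..v} F"
    using F compact_Icc compact_uniformly_continuous by blast
  then obtain \<delta> where d: "\<delta> > 0" and dF: "\<And>x x'. x \<in> {u..v} \<Longrightarrow> x' \<in> {u..v} \<Longrightarrow> dist x' x < \<delta> \<Longrightarrow> dist (F x') (F x) < \<eta>"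
    unfolding uniformly_continuous_on_def using eta by metis
  have fint: "(\<lambda>t. F t * g' t) integrable_on {u..v}"
    using cont_absint_mult[OF F g'] set_lebesgue_integral_eq_integral(1) by blast
  show "\<exists>\<delta>>0. \<forall>p. p tagged_division_of {u..v} \<and> (\<lambda>x. ball x \<delta>) fine p \<longrightarrow>
        \<bar>(\<Sum>(x,K)\<in>p. F x * (g (Sup K) - g (Inf K))) - integral {u..v} (\<lambda>t. F t * g' t)\<bar> < e"
  proof (intro exI[of _ \<delta>] conjI allI impI)
    show "\<delta> > 0" by fact
    fix p assume p: "p tagged_division_of {u..v} \<and> (\<lambda>x. ball x \<delta>) fine p"
    have pt: "p tagged_division_of cbox u v" using p by simp
    have Kfacts: "x \<in> K \<and> K \<subseteq> {u..v} \<and> K = {Inf K..Sup K} \<and> Inf K \<le> Sup K \<and> u \<le> Inf K \<and> Sup K \<le> v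
          \<and> K \<subseteq> ball x \<delta>" if xp: "(x,K) \<in> p" for x K
    proof -
      have xK: "x \<in> K" and Ksub: "K \<subseteq> {u..v}" using p xp by auto
      obtain a' b' where K: "K = cbox a' b'" using tagged_division_ofD(4)[OF conjunct1[OF p] xp] by blast
      have ab: "a' \<le> b'" using xK K by auto
      have "Inf K = a'" "Sup K = b'" using K ab by auto
      moreover have "K \<subseteq> ball x \<delta>" using p xp by (auto simp: fine_def)
      ultimately show ?thesis using xK Ksub K ab by auto
    qed
    have eqK: "F x * (g (Sup K) - g (Inf K)) = integral K (\<lambda>t. F x * g' t)" if "(x,K) \<in> p" for x K
    proof -
      have "(g' has_integral (g (Sup K) - g (Inf K))) {Inf K..Sup K}"
        using Kfacts[OF that] by (intro FTC) auto
      then have "((\<lambda>t. F x * g' t) has_integral F x * (g (Sup K) - g (Inf K))) {Inf K..Sup K}"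
        by (rule has_integral_mult_right)
      then show ?thesis using Kfacts[OF that] by (metis integral_unique)
    qed
    have split: "integral {u..v} (\<lambda>t. F t * g' t) = (\<Sum>(x,K)\<in>p. integral K (\<lambda>t. F t * g' t))"
      using integral_combine_tagged_division_topdown[OF _ pt, of "\<lambda>t. F t * g' t"] fint by simp
    have splitV: "V = (\<Sum>(x,K)\<in>p. integral K (\<lambda>t. \<bar>g' t\<bar>))"
      using integral_combine_tagged_division_topdown[OF _ pt, of "\<lambda>t. \<bar>g' t\<bar>"] ag by (simp add: V_def)
    have intK: "f integrable_on K" if "(x,K) \<in> p" "f integrable_on {u..v}" for f :: "real \<Rightarrow> real" and x K
      using Kfacts[OF that(1)] that(2) by (metis integrable_on_subinterval)
    have bnd: "\<bar>integral K (\<lambda>t. F x * g' t) - integral K (\<lambda>t. F t * g' t)\<bar> \<le> \<eta> * integral K (\<lambda>t. \<bar>g' t\<bar>)"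
      if xK: "(x,K) \<in> p" for x K
    proof -
      have i1: "(\<lambda>t. F x * g' t) integrable_on K"
        using intK[OF xK] g' set_lebesgue_integral_eq_integral(1) integrable_on_mult_right by blast
      have i2: "(\<lambda>t. F t * g' t) integrable_on K" using intK[OF xK fint] .
      have i3: "(\<lambda>t. \<bar>g' t\<bar>) integrable_on K" using intK[OF xK ag] .
      have "integral K (\<lambda>t. F x * g' t) - integral K (\<lambda>t. F t * g' t) = integral K (\<lambda>t. F x * g' t - F t * g' t)"
        by (rule integral_diff[OF i1 i2, symmetric])
      also have "\<dots> = integral K (\<lambda>t. (F x - F t) * g' t)"
        by (simp only: left_diff_distrib)
      also have "\<bar>\<dots>\<bar> \<le> integral K (\<lambda>t. \<eta> * \<bar>g' t\<bar>)"
      proof -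
        have "norm (integral K (\<lambda>t. (F x - F t) * g' t)) \<le> integral K (\<lambda>t. \<eta> * \<bar>g' t\<bar>)"
        proof (rule Henstock_Kurzweil_Integration.integral_norm_bound_integral)
          show "(\<lambda>t. (F x - F t) * g' t) integrable_on K"
            using integrable_diff[OF i1 i2] by (simp only: left_diff_distrib)
          show "(\<lambda>t. \<eta> * \<bar>g' t\<bar>) integrable_on K" by (rule integrable_on_mult_right[OF i3])
          fix t assume t: "t \<in> K"
          have tb: "t \<in> ball x \<delta>" "t \<in> {u..v}" "x \<in> {u..v}" using Kfacts[OF xK] t by blast+
          have "dist t x < \<delta>" using tb by (simp add: dist_commute)
          then have "dist (F t) (F x) < \<eta>" using tb by (intro dF) auto
          then have "\<bar>F x - F t\<bar> \<le> \<eta>" by (simp add: dist_real_def abs_minus_commute)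
          then show "norm ((F x - F t) * g' t) \<le> \<eta> * \<bar>g' t\<bar>"
            by (simp add: abs_mult mult_right_mono)
        qed
        then show ?thesis by simp
      qed
      also have "\<dots> = \<eta> * integral K (\<lambda>t. \<bar>g' t\<bar>)" by simp
      finally show ?thesis .
    qed
    have "(\<Sum>(x,K)\<in>p. F x * (g (Sup K) - g (Inf K))) - integral {u..v} (\<lambda>t. F t * g' t)
        = (\<Sum>(x,K)\<in>p. integral K (\<lambda>t. F x * g' t) - integral K (\<lambda>t. F t * g' t))"
      unfolding split sum_subtractf[symmetric]
      by (intro sum.cong refl) (auto simp: eqK)
    also have "\<bar>\<dots>\<bar> \<le> (\<Sum>(x,K)\<in>p. \<bar>integral K (\<lambda>t. F x * g' t) - integral K (\<lambda>t. F t * g' t)\<bar>)"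
      by (rule order_trans[OF sum_abs]) (simp add: case_prod_unfold)
    also have "\<dots> \<le> (\<Sum>(x,K)\<in>p. \<eta> * integral K (\<lambda>t. \<bar>g' t\<bar>))"
    proof (rule sum_mono)
      fix xK assume xKp: "xK \<in> p"
      obtain x K where xKe: "xK = (x,K)" by (cases xK)
      show "(case xK of (x, K) \<Rightarrow> \<bar>integral K (\<lambda>t. F x * g' t) - integral K (\<lambda>t. F t * g' t)\<bar>)
           \<le> (case xK of (x, K) \<Rightarrow> \<eta> * integral K (\<lambda>t. \<bar>g' t\<bar>))"
        unfolding xKe prod.case by (rule bnd) (use xKp xKe in simp)
    qed
    also have "\<dots> = \<eta> * V" unfolding splitV by (simp add: sum_distrib_left case_prod_unfold)
    also have "\<dots> < e"
    proof -
      have "\<eta> * V = e * (V / (V + 1))" by (simp add: \<eta>_def)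
      also have "\<dots> < e * 1" using e V0 by (intro mult_strict_left_mono) auto
      finally show ?thesis by simp
    qed
    finally show "\<bar>(\<Sum>(x,K)\<in>p. F x * (g (Sup K) - g (Inf K))) - integral {u..v} (\<lambda>t. F t * g' t)\<bar> < e" .
  qed
qed

lemma Gamma_pos: "x > 0 \<Longrightarrow> Gamma x > (0::real)"
  by (simp add: Gamma_real_pos_exp)

lemma Gamma_succ: "x > 0 \<Longrightarrow> Gamma (x + 1) = x * Gamma (x::real)"
  by (rule Gamma_plus1) (auto dest: nonpos_Ints_nonpos)

lemma kr_has_integral:
  fixes m y q :: real
  assumes m: "m > 0" and yq: "y \<le> q"
  shows "((\<lambda>t. (t - y) powr (m - 1)) has_integral (q - y) powr m / m) {y..q}"
proof -
  have "((\<lambda>x. x powr (m - 1)) has_integral ((q - y) powr (m - 1 + 1) / (m - 1 + 1))) {0..q-y}"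
    using m yq by (intro has_integral_powr_from_0) auto
  then have "((\<lambda>x. x powr (m - 1)) has_integral ((q - y) powr m / m)) {0..q-y}" by simp
  from has_integral_shift_real_ivl[OF this, of "-y"] show ?thesis by simp
qed

lemma kl_has_integral:
  fixes m p x :: real
  assumes m: "m > 0" and px: "p \<le> x"
  shows "((\<lambda>t. (x - t) powr (m - 1)) has_integral (x - p) powr m / m) {p..x}"
proof -
  have "((\<lambda>s. s powr (m - 1)) has_integral ((x - p) powr (m - 1 + 1) / (m - 1 + 1))) {0..x-p}"
    using m px by (intro has_integral_powr_from_0) auto
  then have "((\<lambda>s. s powr (m - 1)) has_integral ((x - p) powr m / m)) {0..x-p}" by simp
  then have "((\<lambda>s. (- s) powr (m - 1)) has_integral ((x - p) powr m / m)) {-(x-p)..-0}"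
    by (subst has_integral_reflect_real) simp
  from has_integral_shift_real_ivl[OF this, of "-x"] show ?thesis by simp
qed

lemma kr_absint:
  fixes m y q :: real
  assumes "m > 0"
  shows "(\<lambda>t. (t - y) powr (m - 1)) absolutely_integrable_on {y..q}"
proof (cases "y \<le> q")
  case True
  show ?thesis
    by (rule nonnegative_absolutely_integrable_1)
       (use kr_has_integral[OF assms True] in \<open>auto simp: integrable_on_def\<close>)
next
  case False
  then show ?thesis by simp
qed

lemma kl_absint:
  fixes m p x :: real
  assumes "m > 0"
  shows "(\<lambda>t. (x - t) powr (m - 1)) absolutely_integrable_on {p..x}"
proof (cases "p \<le> x")
  case True
  show ?thesis
    by (rule nonnegative_absolutely_integrable_1)
       (use kl_has_integral[OF assms True] in \<open>auto simp: integrable_on_def\<close>)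
next
  case False
  then show ?thesis by simp
qed

definition Rm :: "real \<Rightarrow> real \<Rightarrow> (real \<Rightarrow> real) \<Rightarrow> real \<Rightarrow> real" where
  "Rm b m \<psi> y = (1 / Gamma m) * integral {y..b} (\<lambda>t. (t - y) powr (m - 1) * \<psi> t)"

lemma RL_right_Rm: "RL_right b n \<psi> y = Rm b n \<psi> y"
proof -
  have "integral {y..b} (\<lambda>t. rl_kernel n (t - y) * \<psi> t) = integral {y..b} (\<lambda>t. (t - y) powr (n - 1) * \<psi> t)"
    by (rule integral_spike[of "{y}"]) (auto simp: rl_kernel_def)
  then show ?thesis by (simp add: RL_right_def Rm_def)
qed

lemma parts_kernel:
  fixes \<psi> \<psi>' :: "real \<Rightarrow> real"
  assumes m: "m > 0" and yb: "y \<le> b"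
    and d: "\<And>t. (\<psi> has_real_derivative \<psi>' t) (at t)"
    and c: "continuous_on UNIV \<psi>'" and z: "\<psi> b = 0"
  shows "integral {y..b} (\<lambda>t. (t - y) powr (m - 1) * \<psi> t)
       = - (1 / m) * integral {y..b} (\<lambda>t. (t - y) powr m * \<psi>' t)"
proof -
  define f where "f t = (t - y) powr m / m" for t
  define Y where "Y = - (1 / m) * integral {y..b} (\<lambda>t. (t - y) powr m * \<psi>' t)"
  have cpsi: "continuous_on {y..b} \<psi>"
    using d by (meson DERIV_continuous continuous_at_imp_continuous_on)
  have cf: "continuous_on {y..b} f"
    unfolding f_def using m by (intro continuous_intros continuous_on_powr') auto
  have df: "(f has_vector_derivative (t - y) powr (m - 1)) (at t)" if "t \<in> {y<..<b}" for t
  proof -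
    have "((\<lambda>t. (t - y) powr m) has_real_derivative m * (t - y) powr (m - of_nat 1) * 1) (at t)"
      using that by (intro DERIV_fun_powr derivative_eq_intros) auto
    then have "((\<lambda>t. (t - y) powr m / m) has_real_derivative (m * (t - y) powr (m - of_nat 1) * 1) / m) (at t)"
      by (rule DERIV_cdivide)
    then have "(f has_real_derivative (t - y) powr (m - 1)) (at t)"
      unfolding f_def using m by simp
    then show ?thesis by (simp add: has_real_derivative_iff_has_vector_derivative)
  qed
  have dpsi: "(\<psi> has_vector_derivative \<psi>' t) (at t)" for t
    using d by (simp add: has_real_derivative_iff_has_vector_derivative)
  have int0: "(\<lambda>t. (t - y) powr m * \<psi>' t) integrable_on {y..b}"
    using m by (intro integrable_continuous_interval continuous_intros continuous_on_powr'
        continuous_on_subset[OF c]) auto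
  have "((\<lambda>t. f t * \<psi>' t) has_integral (f b * \<psi> b - f y * \<psi> y - Y)) {y..b}"
  proof -
    have "((\<lambda>t. (1 / m) * ((t - y) powr m * \<psi>' t)) has_integral (1 / m) * integral {y..b} (\<lambda>t. (t - y) powr m * \<psi>' t)) {y..b}"
      using int0 by (intro has_integral_mult_right integrable_integral)
    moreover have "f b * \<psi> b - f y * \<psi> y - Y = (1 / m) * integral {y..b} (\<lambda>t. (t - y) powr m * \<psi>' t)"
      using z by (simp add: f_def Y_def)
    ultimately show ?thesis by (simp add: f_def)
  qed
  from integration_by_parts_interior[OF bounded_bilinear_mult yb cf cpsi df dpsi this]
  have "((\<lambda>t. (t - y) powr (m - 1) * \<psi> t) has_integral Y) {y..b}" .
  then show ?thesis unfolding Y_def by (rule integral_unique)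
qed

lemma Rm_parts:
  fixes \<psi> \<psi>' :: "real \<Rightarrow> real"
  assumes m: "m > 0"
    and d: "\<And>t. (\<psi> has_real_derivative \<psi>' t) (at t)"
    and c: "continuous_on UNIV \<psi>'" and z: "\<psi> b = 0"
  shows "Rm b m \<psi> y = - Rm b (m + 1) \<psi>' y"
proof (cases "y \<le> b")
  case True
  have G: "Gamma (m + 1) = m * Gamma m" using m by (rule Gamma_succ)
  have g: "Gamma m \<noteq> 0" using Gamma_pos[OF m] by simp
  show ?thesis
    unfolding Rm_def parts_kernel[OF m True d c z] G using m g by (simp add: field_simps)
next
  case False
  then show ?thesis by (simp add: Rm_def)
qed

lemma maxpow_deriv:
  fixes p s :: real
  assumes p: "p > 1"
  shows "((\<lambda>s. (max s 0) powr p) has_real_derivative p * (max s 0) powr (p - 1)) (at s)"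
proof -
  consider "s > 0" | "s < 0" | "s = 0" by linarith
  then show ?thesis
  proof cases
    case 1
    have "((\<lambda>s. s powr p) has_real_derivative p * s powr (p - 1)) (at s)"
      using 1 by (rule has_real_derivative_powr)
    then have "((\<lambda>s. (max s 0) powr p) has_real_derivative p * s powr (p - 1)) (at s)"
      by (rule has_field_derivative_transform_within_open[of _ _ _ "{0<..}"]) (use 1 in auto)
    then show ?thesis using 1 by simp
  next
    case 2
    have "((\<lambda>s. 0) has_real_derivative 0) (at s)" by simp
    then have "((\<lambda>s. 0) has_real_derivative p * (max s 0) powr (p - 1)) (at s)"
      using 2 by simp
    then show ?thesis
      by (rule has_field_derivative_transform_within_open[of _ _ _ "{..<0}"]) (use 2 in auto)
  next
    case 3
    have lim: "((\<lambda>h. ((max (0 + h) 0) powr p - (max 0 0) powr p) / h) \<longlongrightarrow> 0) (at 0)"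
    proof (rule Lim_null_comparison)
      show "\<forall>\<^sub>F h in at 0. norm (((max (0 + h) 0) powr p - (max 0 0) powr p) / h) \<le> \<bar>h\<bar> powr (p - 1)"
      proof (rule always_eventually, intro allI)
        fix h :: real
        show "norm (((max (0 + h) 0) powr p - (max 0 0) powr p) / h) \<le> \<bar>h\<bar> powr (p - 1)"
        proof (cases "h > 0")
          case True
          then have "h powr p / h = h powr (p - 1)" by (simp add: powr_diff)
          then show ?thesis using True by (simp add: max_def)
        next
          case False
          then show ?thesis by (simp add: max_def)
        qed
      qed
      show "((\<lambda>h. \<bar>h\<bar> powr (p - 1)) \<longlongrightarrow> 0) (at (0::real))"
        using p by (intro tendsto_zero_powrI tendsto_eq_intros) (auto intro!: tendsto_eq_intros)
    qed
    have "((\<lambda>s. (max s 0) powr p) has_real_derivative 0) (at 0)"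
      unfolding DERIV_def using lim by simp
    then show ?thesis using 3 p by simp
  qed
qed

lemma cont_maxpow:
  fixes q :: real
  assumes "q > 0" and "continuous_on S f"
  shows "continuous_on S (\<lambda>x. (max (f x) 0) powr q)"
  using assms by (intro continuous_on_powr' continuous_intros) auto

lemma Rm_full:
  fixes h :: "real \<Rightarrow> real"
  assumes m: "m > 1" and Ay: "A \<le> y" and c: "continuous_on UNIV h"
  shows "Rm b m h y = (1 / Gamma m) * integral {A..b} (\<lambda>t. (max (t - y) 0) powr (m - 1) * h t)"
proof (cases "y \<le> b")
  case True
  have int: "(\<lambda>t. (max (t - y) 0) powr (m - 1) * h t) integrable_on {A..b}"
    using m by (intro integrable_continuous_interval continuous_intros cont_maxpow
        continuous_on_subset[OF c]) auto
  have "integral {A..b} (\<lambda>t. (max (t - y) 0) powr (m - 1) * h t)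
      = integral {A..y} (\<lambda>t. (max (t - y) 0) powr (m - 1) * h t) + integral {y..b} (\<lambda>t. (max (t - y) 0) powr (m - 1) * h t)"
    using Henstock_Kurzweil_Integration.integral_combine[OF Ay True int] by simp
  also have "integral {A..y} (\<lambda>t. (max (t - y) 0) powr (m - 1) * h t) = integral {A..y} (\<lambda>t. 0)"
    by (rule integral_cong) (auto simp: max_def)
  also have "integral {y..b} (\<lambda>t. (max (t - y) 0) powr (m - 1) * h t) = integral {y..b} (\<lambda>t. (t - y) powr (m - 1) * h t)"
    by (rule integral_cong) (auto simp: max_def)
  finally show ?thesis by (simp add: Rm_def)
next
  case False
  have "integral {A..b} (\<lambda>t. (max (t - y) 0) powr (m - 1) * h t) = integral {A..b} (\<lambda>t. 0)"
    by (rule integral_cong) (use False in \<open>auto simp: max_def\<close>)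
  then show ?thesis using False by (simp add: Rm_def)
qed

lemma Rm_deriv:
  fixes \<psi>0 \<psi>1 \<psi>2 :: "real \<Rightarrow> real"
  assumes n: "n > 0"
    and d0: "\<And>t. (\<psi>0 has_real_derivative \<psi>1 t) (at t)"
    and d1: "\<And>t. (\<psi>1 has_real_derivative \<psi>2 t) (at t)"
    and c2: "continuous_on UNIV \<psi>2" and z0: "\<psi>0 b = 0" and z1: "\<psi>1 b = 0"
  shows "(Rm b n \<psi>0 has_real_derivative Rm b n \<psi>1 x) (at x)"
proof -
  have c1: "continuous_on UNIV \<psi>1"
    using d1 by (meson DERIV_continuous continuous_at_imp_continuous_on)
  have e0: "Rm b n \<psi>0 y = Rm b (n + 1 + 1) \<psi>2 y" for y
    using Rm_parts[OF n d0 c1 z0, of y] Rm_parts[of "n+1", OF _ d1 c2 z1, of y] n by simp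
  have e1: "Rm b n \<psi>1 x = - Rm b (n + 1) \<psi>2 x"
    using Rm_parts[OF n d1 c2 z1, of x] .
  define A where "A = x - 1"
  define U where "U = {A<..}"
  define f where "f y t = (max (t - y) 0) powr (n + 1) * \<psi>2 t" for y t
  define fx where "fx y t = - ((n + 1) * (max (t - y) 0) powr n) * \<psi>2 t" for y t
  have xU: "x \<in> U" and oU: "open U" and cU: "convex U" by (auto simp: U_def A_def)
  have fder: "((\<lambda>y. f y t) has_field_derivative fx y t) (at y within U)" for y t
  proof -
    have "((\<lambda>s. (max s 0) powr (n + 1)) has_real_derivative (n + 1) * (max (t - y) 0) powr (n + 1 - 1)) (at (t - y))"
      using n by (intro maxpow_deriv) auto
    moreover have dg: "((\<lambda>y. t - y) has_real_derivative -1) (at y)"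
      by (auto intro!: derivative_eq_intros)
    ultimately have "((\<lambda>y. (max (t - y) 0) powr (n + 1)) has_real_derivative (n + 1) * (max (t - y) 0) powr (n + 1 - 1) * (-1)) (at y)"
      by (rule DERIV_chain2)
    then have "((\<lambda>y. (max (t - y) 0) powr (n + 1)) has_real_derivative (n + 1) * (max (t - y) 0) powr n * (-1)) (at y)"
      by simp
    from DERIV_cmult_right[OF this, of "\<psi>2 t"]
    show ?thesis unfolding f_def fx_def by (auto intro: has_field_derivative_at_within simp: algebra_simps)
  qed
  have fint: "f y integrable_on cbox A b" for y
    unfolding f_def using n
    by (auto intro!: integrable_continuous_interval continuous_intros cont_maxpow continuous_on_subset[OF c2])
  have c2c: "continuous_on (U \<times> cbox A b) (\<lambda>p. \<psi>2 (snd p))"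
    by (rule continuous_on_compose2[OF c2 continuous_on_snd]) auto
  have cfx: "continuous_on (U \<times> cbox A b) (\<lambda>(y, t). fx y t)"
    unfolding case_prod_unfold fx_def using n
    by (intro continuous_intros cont_maxpow c2c) auto
  have L: "((\<lambda>y. integral (cbox A b) (f y)) has_field_derivative integral (cbox A b) (fx x)) (at x within U)"
    by (rule leibniz_rule_field_derivative[OF fder fint cfx xU cU])
  then have L2: "((\<lambda>y. integral (cbox A b) (f y)) has_field_derivative integral (cbox A b) (fx x)) (at x)"
    using at_within_open[OF xU oU] by simp
  have G2: "Gamma (n + 1 + 1) = (n + 1) * Gamma (n + 1)" using n by (intro Gamma_succ) auto
  have gpos: "Gamma (n + 1) > 0" using n by (intro Gamma_pos) auto
  have val: "integral (cbox A b) (fx x) = - (n + 1) * Gamma (n + 1) * Rm b (n + 1) \<psi>2 x"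
  proof -
    have "Rm b (n + 1) \<psi>2 x = (1 / Gamma (n + 1)) * integral {A..b} (\<lambda>t. (max (t - x) 0) powr (n + 1 - 1) * \<psi>2 t)"
      using n by (intro Rm_full c2) (auto simp: A_def)
    moreover have "integral (cbox A b) (fx x) = - (n + 1) * integral {A..b} (\<lambda>t. (max (t - x) 0) powr n * \<psi>2 t)"
    proof -
      have "fx x = (\<lambda>t. (- (n + 1)) * ((max (t - x) 0) powr n * \<psi>2 t))"
        by (simp add: fx_def fun_eq_iff algebra_simps)
      then show ?thesis by (simp only: integral_mult_right) simp
    qed
    ultimately show ?thesis using gpos by simp
  qed
  have eqU: "(1 / Gamma (n + 1 + 1)) * integral (cbox A b) (f y) = Rm b n \<psi>0 y" if "y \<in> U" for y
  proof -
    have "Rm b (n + 1 + 1) \<psi>2 y = (1 / Gamma (n + 1 + 1)) * integral {A..b} (\<lambda>t. (max (t - y) 0) powr (n + 1 + 1 - 1) * \<psi>2 t)"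
      using n that by (intro Rm_full c2) (auto simp: U_def)
    then show ?thesis using e0[of y] by (simp add: f_def[abs_def] add.commute)
  qed
  have "((\<lambda>y. (1 / Gamma (n + 1 + 1)) * integral (cbox A b) (f y)) has_field_derivative
          (1 / Gamma (n + 1 + 1)) * integral (cbox A b) (fx x)) (at x)"
    by (rule DERIV_cmult[OF L2])
  also have "(1 / Gamma (n + 1 + 1)) * integral (cbox A b) (fx x) = Rm b n \<psi>1 x"
  proof -
    have g1: "Gamma (n + 1) \<noteq> 0" "n + 1 \<noteq> 0" using gpos n by linarith+
    define c where "c = (n + 1) * Gamma (n + 1)"
    have c: "c \<noteq> 0" using g1 by (simp add: c_def)
    have "(1 / Gamma (n + 1 + 1)) * integral (cbox A b) (fx x) = (1 / c) * (- c * Rm b (n + 1) \<psi>2 x)"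
      unfolding val G2 c_def by (simp only: mult_minus_left mult.assoc)
    also have "\<dots> = - Rm b (n + 1) \<psi>2 x" using c by simp
    finally show ?thesis using e1 by simp
  qed
  finally show ?thesis
    by (rule has_field_derivative_transform_within_open[OF _ oU xU eqU])
qed

lemma absint_lborel:
  fixes f :: "real \<Rightarrow> real"
  assumes fm: "f \<in> borel_measurable borel" and S: "S \<in> sets borel"
    and fi: "f absolutely_integrable_on S"
  shows "set_integrable lborel S f"
proof -
  have m: "(\<lambda>x. indicator S x *\<^sub>R f x) \<in> borel_measurable lborel"
    using fm S by measurable
  show ?thesis
    using fi unfolding set_integrable_def using integrable_completion[OF m] by simp
qed

lemma tri_fubini:
  fixes K :: "real \<Rightarrow> real \<Rightarrow> real" and h :: "real \<Rightarrow> real"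
  assumes Km[measurable]: "(\<lambda>p. K (snd p) (fst p)) \<in> borel_measurable (lborel \<Otimes>\<^sub>M lborel)"
    and hm: "h \<in> borel_measurable borel"
    and hi: "h absolutely_integrable_on {a..x}"
    and Ki: "\<And>t. t \<in> {a..x} \<Longrightarrow> (\<lambda>s. K s t) absolutely_integrable_on {t..x}"
    and Kb: "\<And>t. t \<in> {a..x} \<Longrightarrow> integral {t..x} (\<lambda>s. \<bar>K s t\<bar>) \<le> M"
  shows "(\<lambda>s. integral {a..s} (\<lambda>t. K s t * h t)) integrable_on {a..x}"
    and "integral {a..x} (\<lambda>s. integral {a..s} (\<lambda>t. K s t * h t))
         = integral {a..x} (\<lambda>t. h t * integral {t..x} (\<lambda>s. K s t))"
proof -
  define f where "f t s = (if a \<le> t \<and> t \<le> s \<and> s \<le> x then K s t * h t else 0)" for t s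
  have hm2[measurable]: "h \<in> borel_measurable lborel" using hm by simp
  have fm[measurable]: "(\<lambda>p. f (fst p) (snd p)) \<in> borel_measurable (lborel \<Otimes>\<^sub>M lborel)"
    unfolding f_def by measurable
  have cp: "case_prod f = (\<lambda>p. f (fst p) (snd p))" by (simp add: case_prod_unfold)
  have hint: "set_integrable lborel {a..x} h"
    by (rule absint_lborel[OF hm _ hi]) auto
  have Kmeas: "(\<lambda>s. K s t) \<in> borel_measurable borel" for t
  proof -
    have "(\<lambda>s. (\<lambda>p. K (snd p) (fst p)) (t, s)) \<in> borel_measurable lborel" by measurable
    then show ?thesis by simp
  qed
  have Kint: "set_integrable lborel {t..x} (\<lambda>s. K s t)" if "t \<in> {a..x}" for t
    by (rule absint_lborel[OF Kmeas _ Ki[OF that]]) auto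
  have Kint_abs: "set_integrable lborel {t..x} (\<lambda>s. \<bar>K s t\<bar>)" if "t \<in> {a..x}" for t
    using set_integrable_abs[OF Kint[OF that]] by simp
  have fin: "(\<lambda>s. f t s) = (\<lambda>s. h t * (indicator {t..x} s *\<^sub>R K s t))" if "t \<in> {a..x}" for t
    using that by (auto simp: f_def fun_eq_iff indicator_def)
  have fout: "(\<lambda>s. f t s) = (\<lambda>s. 0)" if "t \<notin> {a..x}" for t
    using that by (auto simp: f_def fun_eq_iff)
  have integ2: "integrable lborel (\<lambda>s. f t s)" for t
  proof (cases "t \<in> {a..x}")
    case True
    show ?thesis unfolding fin[OF True]
      using Kint[OF True] unfolding set_integrable_def by (rule integrable_mult_right)
  qed (simp add: fout)
  have Mnn: "0 \<le> M" if "a \<le> x"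
    using Kb[of x] that by simp
  have innerabs: "(\<integral>s. norm (f t s) \<partial>lborel) = \<bar>h t\<bar> * integral {t..x} (\<lambda>s. \<bar>K s t\<bar>)" if t: "t \<in> {a..x}" for t
  proof -
    have "(\<lambda>s. norm (f t s)) = (\<lambda>s. \<bar>h t\<bar> * (indicator {t..x} s *\<^sub>R \<bar>K s t\<bar>))"
      using fin[OF t] by (auto simp: fun_eq_iff abs_mult indicator_def)
    then have "(\<integral>s. norm (f t s) \<partial>lborel) = \<bar>h t\<bar> * (LINT s:{t..x}|lborel. \<bar>K s t\<bar>)"
      by (simp add: set_lebesgue_integral_def)
    also have "(LINT s:{t..x}|lborel. \<bar>K s t\<bar>) = integral {t..x} (\<lambda>s. \<bar>K s t\<bar>)"
      by (rule set_borel_integral_eq_integral(2)[OF Kint_abs[OF t]])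
    finally show ?thesis .
  qed
  have integ1: "integrable lborel (\<lambda>t. \<integral>s. norm (f t s) \<partial>lborel)"
  proof (rule Bochner_Integration.integrable_bound)
    show "integrable lborel (\<lambda>t. M * (indicator {a..x} t *\<^sub>R h t))"
      using hint unfolding set_integrable_def by (rule integrable_mult_right)
    show "(\<lambda>t. \<integral>s. norm (f t s) \<partial>lborel) \<in> borel_measurable lborel"
      by measurable
    show "AE t in lborel. norm (\<integral>s. norm (f t s) \<partial>lborel) \<le> norm (M * (indicator {a..x} t *\<^sub>R h t))"
    proof (rule AE_I2)
      fix t
      show "norm (\<integral>s. norm (f t s) \<partial>lborel) \<le> norm (M * (indicator {a..x} t *\<^sub>R h t))"
      proof (cases "t \<in> {a..x}")
        case True
        have M0: "0 \<le> M" using True Mnn by auto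
        have "norm (\<integral>s. norm (f t s) \<partial>lborel) = \<bar>h t\<bar> * integral {t..x} (\<lambda>s. \<bar>K s t\<bar>)"
          unfolding innerabs[OF True] using integral_nonneg[of "\<lambda>s. \<bar>K s t\<bar>" "{t..x}"]
            set_borel_integral_eq_integral(1)[OF Kint_abs[OF True]] by (simp add: abs_mult)
        also have "\<dots> \<le> \<bar>h t\<bar> * M" using Kb[OF True] by (intro mult_left_mono) auto
        also have "\<dots> = norm (M * (indicator {a..x} t *\<^sub>R h t))" using True M0 by (simp add: abs_mult)
        finally show ?thesis .
      next
        case False
        then show ?thesis by (simp add: fout)
      qed
    qed
  qed
  have fint: "integrable (lborel \<Otimes>\<^sub>M lborel) (case_prod f)"
    unfolding cp
    by (rule lborel_pair.Fubini_integrable) (use integ1 integ2 in auto)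
  have FUB: "(\<integral>s. (\<integral>t. f t s \<partial>lborel) \<partial>lborel) = (\<integral>t. (\<integral>s. f t s \<partial>lborel) \<partial>lborel)"
    by (rule lborel_pair.Fubini_integral[OF fint])
  define \<Phi> where "\<Phi> t = integral {t..x} (\<lambda>s. K s t)" for t
  have rhs_fun: "(\<lambda>t. \<integral>s. f t s \<partial>lborel) = (\<lambda>t. indicator {a..x} t *\<^sub>R (h t * \<Phi> t))"
  proof
    fix t
    show "(\<integral>s. f t s \<partial>lborel) = indicator {a..x} t *\<^sub>R (h t * \<Phi> t)"
    proof (cases "t \<in> {a..x}")
      case True
      have "(\<integral>s. f t s \<partial>lborel) = h t * (LINT s:{t..x}|lborel. K s t)"
        unfolding fin[OF True] by (simp add: set_lebesgue_integral_def)
      also have "(LINT s:{t..x}|lborel. K s t) = \<Phi> t"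
        unfolding \<Phi>_def by (rule set_borel_integral_eq_integral(2)[OF Kint[OF True]])
      finally show ?thesis using True by simp
    next
      case False
      then show ?thesis by (simp add: fout)
    qed
  qed
  have rint: "set_integrable lborel {a..x} (\<lambda>t. h t * \<Phi> t)"
    using lborel_pair.integrable_fst[OF fint] unfolding rhs_fun set_integrable_def .
  have RHS: "(\<integral>t. (\<integral>s. f t s \<partial>lborel) \<partial>lborel) = integral {a..x} (\<lambda>t. h t * \<Phi> t)"
    unfolding rhs_fun using set_borel_integral_eq_integral(2)[OF rint]
    by (simp add: set_lebesgue_integral_def)
  define G where "G s = integral {a..s} (\<lambda>t. K s t * h t)" for s
  define \<Psi> where "\<Psi> s = (\<integral>t. f t s \<partial>lborel)" for s
  have Psii: "integrable lborel \<Psi>"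
    unfolding \<Psi>_def by (rule lborel_pair.integrable_snd[OF fint])
  have Psim[measurable]: "\<Psi> \<in> borel_measurable lborel"
    by (rule borel_measurable_integrable[OF Psii])
  have AEeq: "AE s in lborel. \<Psi> s = indicator {a..x} s *\<^sub>R G s"
    using lborel_pair.AE_integrable_snd[OF fint]
  proof (rule AE_mp, intro AE_I2 impI)
    fix s assume si: "integrable lborel (\<lambda>t. f t s)"
    show "\<Psi> s = indicator {a..x} s *\<^sub>R G s"
    proof (cases "s \<in> {a..x}")
      case True
      have eq: "(\<lambda>t. f t s) = (\<lambda>t. indicator {a..s} t *\<^sub>R (K s t * h t))"
        using True by (auto simp: f_def fun_eq_iff indicator_def)
      have si2: "set_integrable lborel {a..s} (\<lambda>t. K s t * h t)"
        using si unfolding eq set_integrable_def .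
      have "\<Psi> s = (LINT t:{a..s}|lborel. K s t * h t)"
        unfolding \<Psi>_def eq by (simp add: set_lebesgue_integral_def)
      also have "\<dots> = G s" unfolding G_def by (rule set_borel_integral_eq_integral(2)[OF si2])
      finally show ?thesis using True by simp
    next
      case False
      then have "(\<lambda>t. f t s) = (\<lambda>t. 0)" by (auto simp: f_def fun_eq_iff)
      then show ?thesis using False by (simp add: \<Psi>_def)
    qed
  qed
  have Psim2: "\<Psi> \<in> borel_measurable lebesgue"
    using Psim by (rule measurable_completion)
  have AEeq2: "AE s in lebesgue. \<Psi> s = indicator {a..x} s *\<^sub>R G s"
    using AEeq by (rule AE_completion)
  have Gm: "(\<lambda>s. indicator {a..x} s *\<^sub>R G s) \<in> borel_measurable lebesgue"
    by (rule borel_measurable_AE[OF Psim2 AEeq2])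
  have Psii2: "integrable lebesgue \<Psi>"
    using integrable_completion[OF Psim] Psii by simp
  have Gi: "integrable lebesgue (\<lambda>s. indicator {a..x} s *\<^sub>R G s)"
    using integrable_cong_AE[OF Psim2 Gm AEeq2] Psii2 by simp
  then have Gabs: "G absolutely_integrable_on {a..x}"
    unfolding set_integrable_def .
  show "(\<lambda>s. integral {a..s} (\<lambda>t. K s t * h t)) integrable_on {a..x}"
    using set_lebesgue_integral_eq_integral(1)[OF Gabs] unfolding G_def .
  have "integral {a..x} G = (LINT s:{a..x}|lebesgue. G s)"
    using set_lebesgue_integral_eq_integral(2)[OF Gabs] by simp
  also have "\<dots> = (\<integral>s. \<Psi> s \<partial>lebesgue)"
  proof -
    have AEeq3: "AE s in lebesgue. indicator {a..x} s *\<^sub>R G s = \<Psi> s"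
      using AEeq2 by (simp add: eq_commute)
    show ?thesis unfolding set_lebesgue_integral_def by (rule integral_cong_AE[OF Gm Psim2 AEeq3])
  qed
  also have "\<dots> = (\<integral>s. \<Psi> s \<partial>lborel)"
    by (rule integral_completion[OF Psim])
  also have "\<dots> = integral {a..x} (\<lambda>t. h t * \<Phi> t)"
    using FUB RHS unfolding \<Psi>_def by simp
  finally show "integral {a..x} (\<lambda>s. integral {a..s} (\<lambda>t. K s t * h t))
         = integral {a..x} (\<lambda>t. h t * integral {t..x} (\<lambda>s. K s t))"
    unfolding G_def \<Phi>_def .
qed

lemma cont_absint_mult2:
  fixes f g :: "real \<Rightarrow> real"
  assumes "continuous_on {p..q} f" "g absolutely_integrable_on {p..q}"
  shows "(\<lambda>x. g x * f x) absolutely_integrable_on {p..q}"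
  using cont_absint_mult[OF assms] by (simp add: mult.commute)

lemma bound_on_Icc:
  fixes f :: "real \<Rightarrow> real"
  assumes "continuous_on {p..q} f"
  obtains B where "B > 0" "\<And>x. x \<in> {p..q} \<Longrightarrow> \<bar>f x\<bar> \<le> B"
proof -
  have "bounded (f ` {p..q})"
    using assms compact_Icc compact_continuous_image compact_imp_bounded by blast
  then obtain B where "B > 0" "\<forall>y\<in>f ` {p..q}. norm y \<le> B" by (auto simp: bounded_pos)
  then show ?thesis using that by auto
qed

lemma fub_inst:
  fixes X F :: "real \<Rightarrow> real"
  assumes m: "m > 0" and cX: "continuous_on UNIV X" and cF: "continuous_on UNIV F"
  shows "(\<lambda>x. integral {a..x} (\<lambda>t. (x - t) powr (m - 1) * F t) * X x) integrable_on {a..b}"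
    and "integral {a..b} (\<lambda>x. integral {a..x} (\<lambda>t. (x - t) powr (m - 1) * F t) * X x)
       = integral {a..b} (\<lambda>t. F t * integral {t..b} (\<lambda>x. (x - t) powr (m - 1) * X x))"
proof -
  define K where "K s t = (s - t) powr (m - 1) * X s" for s t
  have Xm[measurable]: "X \<in> borel_measurable borel" by (rule borel_measurable_continuous_onI[OF cX])
  have Fm[measurable]: "F \<in> borel_measurable borel" by (rule borel_measurable_continuous_onI[OF cF])
  have Km: "(\<lambda>p. K (snd p) (fst p)) \<in> borel_measurable (lborel \<Otimes>\<^sub>M lborel)"
    unfolding K_def by measurable
  have hi: "F absolutely_integrable_on {a..b}"
    by (rule absolutely_integrable_continuous_real) (rule continuous_on_subset[OF cF], auto)
  obtain B where B: "B > 0" "\<And>x. x \<in> {a..b} \<Longrightarrow> \<bar>X x\<bar> \<le> B"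
    using bound_on_Icc[OF continuous_on_subset[OF cX]] by blast
  have Ki: "(\<lambda>s. K s t) absolutely_integrable_on {t..b}" for t
    unfolding K_def by (rule cont_absint_mult2[OF continuous_on_subset[OF cX] kr_absint[OF m]]) auto
  have Kb: "integral {t..b} (\<lambda>s. \<bar>K s t\<bar>) \<le> B * (b - a) powr m / m" if t: "t \<in> {a..b}" for t
  proof -
    have i1: "(\<lambda>s. \<bar>K s t\<bar>) integrable_on {t..b}"
      using Ki[of t] by (simp add: absolutely_integrable_on_def)
    have hk: "((\<lambda>s. (s - t) powr (m - 1)) has_integral (b - t) powr m / m) {t..b}"
      using t by (intro kr_has_integral m) auto
    have "integral {t..b} (\<lambda>s. \<bar>K s t\<bar>) \<le> integral {t..b} (\<lambda>s. B * (s - t) powr (m - 1))"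
    proof (rule integral_le[OF i1])
      show "(\<lambda>s. B * (s - t) powr (m - 1)) integrable_on {t..b}"
        using hk by (intro integrable_on_mult_right) (auto simp: integrable_on_def)
      fix s assume s: "s \<in> {t..b}"
      then have "\<bar>X s\<bar> \<le> B" using t B by auto
      then show "\<bar>K s t\<bar> \<le> B * (s - t) powr (m - 1)"
        unfolding K_def by (simp add: abs_mult mult.commute mult_right_mono)
    qed
    also have "\<dots> = B * ((b - t) powr m / m)" using integral_unique[OF hk] by simp
    also have "\<dots> \<le> B * ((b - a) powr m / m)"
      using t B m by (intro mult_left_mono divide_right_mono powr_mono2) auto
    finally show ?thesis by simp
  qed
  have Ki2: "(\<lambda>s. K s t) absolutely_integrable_on {t..b}" if "t \<in> {a..b}" for t
    using Ki .
  note TF = tri_fubini[of K F a b "B * (b - a) powr m / m", OF Km Fm hi Ki2 Kb]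
  have eqL: "integral {a..s} (\<lambda>t. K s t * F t) = integral {a..s} (\<lambda>t. (s - t) powr (m - 1) * F t) * X s" for s
  proof -
    have "(\<lambda>t. K s t * F t) = (\<lambda>t. (s - t) powr (m - 1) * F t * X s)"
      by (auto simp: K_def fun_eq_iff algebra_simps)
    then show ?thesis by simp
  qed
  show "(\<lambda>x. integral {a..x} (\<lambda>t. (x - t) powr (m - 1) * F t) * X x) integrable_on {a..b}"
    using TF(1) unfolding eqL .
  show "integral {a..b} (\<lambda>x. integral {a..x} (\<lambda>t. (x - t) powr (m - 1) * F t) * X x)
       = integral {a..b} (\<lambda>t. F t * integral {t..b} (\<lambda>x. (x - t) powr (m - 1) * X x))"
    using TF(2)[unfolded eqL] unfolding K_def .
qed

lemma rs_const: "rs_integral F (\<lambda>t. c) u v = 0"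
  by (rule rs_integral_eq) (auto simp: rs_has_integral_def intro: exI[of _ 1])

lemma clamp_cont:
  fixes F :: "real \<Rightarrow> real"
  assumes ab: "a \<le> b" and cF: "continuous_on {a..b} F"
  shows "continuous_on UNIV (\<lambda>t. F (max a (min t b)))"
  by (rule continuous_on_compose2[OF cF]) (use ab in \<open>auto intro!: continuous_intros\<close>)

lemma main_n1:
  fixes F \<psi> \<psi>' :: "real \<Rightarrow> real"
  assumes ab: "a \<le> b"
    and d: "\<And>t. (\<psi> has_real_derivative \<psi>' t) (at t)" and z: "\<psi> b = 0" and Fa: "F a = 0"
  shows "RL_left a b 1 F \<psi> = - integral {a..b} (\<lambda>t. F t * Rm b 1 \<psi>' t)"
proof -
  have pt: "RL_left_pt a 1 F x = F x" for x
    by (simp add: RL_left_pt_def hk_int_def rl_kernel_def rs_const Fa)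
  have rm: "Rm b 1 \<psi>' t = - \<psi> t" if "t \<in> {a..b}" for t
  proof -
    have "integral {t..b} (\<lambda>x. (x - t) powr (1 - 1) * \<psi>' x) = integral {t..b} \<psi>'"
      by (rule integral_spike[of "{t}"]) auto
    also have "\<dots> = \<psi> b - \<psi> t"
    proof (rule integral_unique, rule fundamental_theorem_of_calculus)
      show "t \<le> b" using that by auto
      fix x show "(\<psi> has_vector_derivative \<psi>' x) (at x within {t..b})"
        using d[of x] by (simp add: has_real_derivative_iff_has_vector_derivative has_vector_derivative_at_within)
    qed
    finally show ?thesis using z by (simp add: Rm_def)
  qed
  have "- integral {a..b} (\<lambda>t. F t * Rm b 1 \<psi>' t) = - integral {a..b} (\<lambda>t. - (F t * \<psi> t))"
    by (intro arg_cong[where f=uminus] integral_cong) (simp add: rm)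
  also have "\<dots> = integral {a..b} (\<lambda>t. F t * \<psi> t)" by simp
  finally show ?thesis by (simp add: RL_left_def regular_dist_def pt)
qed

lemma main_ngt1:
  fixes F \<psi> \<psi>' :: "real \<Rightarrow> real"
  assumes ab: "a \<le> b" and n: "n > 1" and cF: "continuous_on {a..b} F" and Fa: "F a = 0"
    and d: "\<And>t. (\<psi> has_real_derivative \<psi>' t) (at t)" and c': "continuous_on UNIV \<psi>'"
    and z: "\<psi> b = 0"
  shows "RL_left a b n F \<psi> = - integral {a..b} (\<lambda>t. F t * Rm b n \<psi>' t)"
proof -
  define Fc where "Fc t = F (max a (min t b))" for t
  have cFc: "continuous_on UNIV Fc" unfolding Fc_def by (rule clamp_cont[OF ab cF])
  have FcF: "Fc t = F t" if "t \<in> {a..b}" for t using that by (simp add: Fc_def)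
  have cpsi: "continuous_on UNIV \<psi>"
    using d by (meson DERIV_continuous continuous_at_imp_continuous_on)
  have n1: "n \<noteq> 1" "n - 1 > 0" using n by auto
  have Gn: "Gamma n = (n - 1) * Gamma (n - 1)"
    using Gamma_succ[of "n - 1"] n1 by simp
  have Gpos: "Gamma (n - 1) > 0" using n1 by (intro Gamma_pos)
  have pt: "RL_left_pt a n F x = (1 / Gamma (n - 1)) * integral {a..x} (\<lambda>t. (x - t) powr (n - 1 - 1) * Fc t)"
    if x: "x \<in> {a..b}" for x
  proof -
    define g where "g t = (x - t) powr (n - 1)" for t
    define g' where "g' t = - ((n - 1) * (x - t) powr (n - 1 - 1))" for t
    define I where "I = integral {a..x} (\<lambda>t. (x - t) powr (n - 1 - 1) * Fc t)"
    have ax: "a \<le> x" using x by auto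
    have g'i: "g' absolutely_integrable_on {a..x}"
    proof -
      have "g' = (\<lambda>t. (- (n - 1)) * (x - t) powr (n - 1 - 1))" by (simp add: g'_def fun_eq_iff algebra_simps)
      then show ?thesis using set_integrable_mult_right[OF kl_absint[OF n1(2), of a x]] by simp
    qed
    have FTC: "(g' has_integral (g q - g p)) {p..q}" if "a \<le> p" "p \<le> q" "q \<le> x" for p q
    proof (rule fundamental_theorem_of_calculus_interior)
      show "p \<le> q" by fact
      show "continuous_on {p..q} g"
        unfolding g_def using that n1 by (intro continuous_on_powr' continuous_intros) auto
      fix t assume t: "t \<in> {p<..<q}"
      then have "x - t > 0" using that by auto
      then have "((\<lambda>t. (x - t) powr (n - 1)) has_real_derivative (n - 1) * (x - t) powr (n - 1 - of_nat 1) * (-1)) (at t)"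
        by (intro DERIV_fun_powr derivative_eq_intros) auto
      then show "(g has_vector_derivative g' t) (at t)"
        by (simp add: g_def[abs_def] g'_def has_real_derivative_iff_has_vector_derivative)
    qed
    have rs: "rs_integral F g a x = integral {a..x} (\<lambda>t. F t * g' t)"
      by (rule rs_integral_eq, rule rs_has_integral_deriv[OF ax continuous_on_subset[OF cF] g'i FTC])
         (use x in auto)
    have "rl_kernel n = (\<lambda>s. s powr (n - 1))" using n1 by (simp add: rl_kernel_def fun_eq_iff)
    then have "RL_left_pt a n F x = (1 / Gamma n) * (F x * g x - F a * g a - rs_integral F g a x)"
      by (simp add: RL_left_pt_def hk_int_def g_def[abs_def])
    also have "\<dots> = (1 / Gamma n) * (- integral {a..x} (\<lambda>t. F t * g' t))"
      using Fa n1 by (simp add: g_def rs)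
    also have "integral {a..x} (\<lambda>t. F t * g' t) = - (n - 1) * I"
    proof -
      have "integral {a..x} (\<lambda>t. F t * g' t) = integral {a..x} (\<lambda>t. - (n - 1) * ((x - t) powr (n - 1 - 1) * Fc t))"
        by (rule integral_cong) (use x in \<open>auto simp: g'_def FcF algebra_simps\<close>)
      then show ?thesis by (simp add: I_def)
    qed
    finally have eq: "RL_left_pt a n F x = (1 / Gamma n) * (- (- (n - 1) * I))" .
    have nz: "n - 1 \<noteq> 0" "Gamma (n - 1) \<noteq> 0" using n1 Gpos by linarith+
    have "(1 / Gamma n) * (- (- (n - 1) * I)) = (1 / Gamma (n - 1)) * I"
      unfolding Gn using nz by (simp add: field_simps)
    then show ?thesis using eq by (simp add: I_def)
  qed
  have "RL_left a b n F \<psi> = integral {a..b} (\<lambda>x. RL_left_pt a n F x * \<psi> x)"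
    using n by (simp add: RL_left_def regular_dist_def)
  also have "\<dots> = integral {a..b} (\<lambda>x. (1 / Gamma (n - 1)) * (integral {a..x} (\<lambda>t. (x - t) powr (n - 1 - 1) * Fc t) * \<psi> x))"
    by (rule integral_cong) (simp add: pt)
  also have "\<dots> = (1 / Gamma (n - 1)) * integral {a..b} (\<lambda>x. integral {a..x} (\<lambda>t. (x - t) powr (n - 1 - 1) * Fc t) * \<psi> x)"
    by simp
  also have "integral {a..b} (\<lambda>x. integral {a..x} (\<lambda>t. (x - t) powr (n - 1 - 1) * Fc t) * \<psi> x)
      = integral {a..b} (\<lambda>t. Fc t * integral {t..b} (\<lambda>x. (x - t) powr (n - 1 - 1) * \<psi> x))"
    by (rule fub_inst(2)[OF n1(2) cpsi cFc])
  also have "(1 / Gamma (n - 1)) * \<dots> = integral {a..b} (\<lambda>t. Fc t * Rm b (n - 1) \<psi> t)"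
    by (simp add: Rm_def)
  also have "\<dots> = integral {a..b} (\<lambda>t. - (F t * Rm b n \<psi>' t))"
  proof (rule integral_cong)
    fix t assume t: "t \<in> {a..b}"
    have "Rm b (n - 1) \<psi> t = - Rm b (n - 1 + 1) \<psi>' t" by (rule Rm_parts[OF n1(2) d c' z])
    then show "Fc t * Rm b (n - 1) \<psi> t = - (F t * Rm b n \<psi>' t)" using t by (simp add: FcF)
  qed
  also have "\<dots> = - integral {a..b} (\<lambda>t. F t * Rm b n \<psi>' t)" by simp
  finally show ?thesis .
qed

lemma ae_replace:
  fixes h :: "real \<Rightarrow> real"
  assumes hi: "h absolutely_integrable_on {a..b}"
  obtains g N where "g \<in> borel_measurable borel" "negligible N" "\<And>x. x \<in> {a..b} - N \<Longrightarrow> h x = g x"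
proof -
  have m: "(\<lambda>x. indicator {a..b} x *\<^sub>R h x) \<in> borel_measurable lebesgue"
    using hi unfolding set_integrable_def by (rule borel_measurable_integrable)
  from completion_ex_borel_measurable_real[OF m] obtain g' where
    g': "g' \<in> borel_measurable lborel" "AE x in lborel. indicator {a..b} x *\<^sub>R h x = g' x" by blast
  have "AE x in lebesgue. indicator {a..b} x *\<^sub>R h x = g' x" by (rule AE_completion[OF g'(2)])
  then obtain N where N: "negligible N" "{x. \<not> (indicator {a..b} x *\<^sub>R h x = g' x)} \<subseteq> N"
    unfolding eventually_ae_filter_negligible by blast
  show ?thesis
  proof (rule that[of g' N])
    show "g' \<in> borel_measurable borel" using g'(1) by simp
    show "negligible N" by fact
    fix x assume x: "x \<in> {a..b} - N"
    then have "indicator {a..b} x *\<^sub>R h x = g' x" using N(2) by blast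
    then show "h x = g' x" using x by simp
  qed
qed

lemma bdd_abs_cont:
  fixes f :: "real \<Rightarrow> real"
  assumes "continuous_on {a..b} f"
  shows "bdd_above ((\<lambda>x. \<bar>f x\<bar>) ` {a..b})"
proof -
  obtain B where "B > 0" "\<And>x. x \<in> {a..b} \<Longrightarrow> \<bar>f x\<bar> \<le> B" using bound_on_Icc[OF assms] by blast
  then show ?thesis by (auto intro!: bdd_aboveI[of _ B])
qed

lemma sup_tendsto0:
  fixes u :: "nat \<Rightarrow> real \<Rightarrow> real"
  assumes S: "S \<noteq> {}" and nn: "\<And>k x. x \<in> S \<Longrightarrow> 0 \<le> u k x"
    and ub: "\<And>k x. x \<in> S \<Longrightarrow> u k x \<le> B k" and B: "B \<longlonglongrightarrow> 0"
  shows "(\<lambda>k. SUP x\<in>S. u k x) \<longlonglongrightarrow> 0"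
proof (rule tendsto_sandwich[OF _ _ tendsto_const B])
  obtain x0 where x0: "x0 \<in> S" using S by blast
  have bdd: "bdd_above (u k ` S)" for k using ub by (auto intro!: bdd_aboveI[of _ "B k"])
  show "\<forall>\<^sub>F k in sequentially. 0 \<le> (SUP x\<in>S. u k x)"
    using x0 nn bdd by (auto intro!: always_eventually cSUP_upper2)
  show "\<forall>\<^sub>F k in sequentially. (SUP x\<in>S. u k x) \<le> B k"
    using S ub by (auto intro!: always_eventually cSUP_least)
qed

lemma A_dist_ge:
  fixes h F :: "real \<Rightarrow> real"
  assumes "continuous_on {a..b} (\<lambda>x. integral {a..x} h - F x)" "x \<in> {a..b}"
  shows "\<bar>integral {a..x} h - F x\<bar> \<le> A_dist a b h F"
  unfolding A_dist_def by (rule cSUP_upper[OF assms(2) bdd_abs_cont[OF assms(1)]])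

lemma KE:
  fixes h F :: "real \<Rightarrow> real"
  assumes n: "0 < n" "n < 1" and ab: "a \<le> b" and hi: "h absolutely_integrable_on {a..b}"
    and cF: "continuous_on {a..b} F" and x: "x \<in> {a..b}"
  shows "RL_left_L1 a n h integrable_on {a..x}"
    and "\<bar>integral {a..x} (RL_left_L1 a n h) - (1 / Gamma n) * integral {a..x} (\<lambda>t. (x - t) powr (n - 1) * F t)\<bar>
         \<le> (b - a) powr n / (n * Gamma n) * A_dist a b h F"
proof -
  obtain g N where gm[measurable]: "g \<in> borel_measurable borel" and N: "negligible N"
    and hg: "\<And>x. x \<in> {a..b} - N \<Longrightarrow> h x = g x"
    using ae_replace[OF hi] by blast
  have ax: "a \<le> x" "x \<le> b" using x by auto
  have gi: "g absolutely_integrable_on {a..b}"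
    by (rule absolutely_integrable_spike[OF hi N]) (use hg in auto)
  have gix: "g absolutely_integrable_on {a..x}"
    by (rule set_integrable_subset[OF gi]) (use ax in auto)
  have rk: "rl_kernel n = (\<lambda>s. s powr (n - 1))" using n by (auto simp: rl_kernel_def fun_eq_iff)
  have RLeq: "RL_left_L1 a n h s = (1 / Gamma n) * integral {a..s} (\<lambda>t. (s - t) powr (n - 1) * g t)"
    if s: "s \<in> {a..b}" for s
  proof -
    have "integral {a..s} (\<lambda>t. rl_kernel n (s - t) * h t) = integral {a..s} (\<lambda>t. (s - t) powr (n - 1) * g t)"
      by (rule integral_spike[OF N]) (use s hg in \<open>auto simp: rk\<close>)
    then show ?thesis by (simp add: RL_left_L1_def)
  qed
  have Heq: "integral {a..s} h = integral {a..s} g" if s: "s \<in> {a..b}" for s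
    by (rule integral_spike[OF N]) (use s hg in auto)
  define M where "M = (b - a) powr n / n"
  have kint: "integral {t..x} (\<lambda>s. (s - t) powr (n - 1)) = (x - t) powr n / n" if "t \<in> {a..x}" for t
    using kr_has_integral[OF n(1), of t x] that by (auto intro: integral_unique)
  have kint2: "integral {t..x} (\<lambda>s. (x - s) powr (n - 1)) = (x - t) powr n / n" if "t \<in> {a..x}" for t
    using kl_has_integral[OF n(1), of t x] that by (auto intro: integral_unique)
  have powle: "(x - t) powr n / n \<le> M" if "t \<in> {a..x}" for t
    unfolding M_def using that ax n by (intro divide_right_mono powr_mono2) auto
  have Km1: "(\<lambda>p. (snd p - fst p) powr (n - 1)) \<in> borel_measurable (lborel \<Otimes>\<^sub>M lborel)" by measurable
  have Km2: "(\<lambda>p. (x - snd p) powr (n - 1)) \<in> borel_measurable (lborel \<Otimes>\<^sub>M lborel)" by measurable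
  have K1i: "(\<lambda>s. (s - t) powr (n - 1)) absolutely_integrable_on {t..x}" if "t \<in> {a..x}" for t
    by (rule kr_absint[OF n(1)])
  have K2i: "(\<lambda>s. (x - s) powr (n - 1)) absolutely_integrable_on {t..x}" if "t \<in> {a..x}" for t
    by (rule kl_absint[OF n(1)])
  have K1b: "integral {t..x} (\<lambda>s. \<bar>(s - t) powr (n - 1)\<bar>) \<le> M" if "t \<in> {a..x}" for t
    using kint[OF that] powle[OF that] by simp
  have K2b: "integral {t..x} (\<lambda>s. \<bar>(x - s) powr (n - 1)\<bar>) \<le> M" if "t \<in> {a..x}" for t
    using kint2[OF that] powle[OF that] by simp
  note F1 = tri_fubini[of "\<lambda>s t. (s - t) powr (n - 1)" g a x M, OF Km1 gm gix K1i K1b]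
  note F2 = tri_fubini[of "\<lambda>s t. (x - s) powr (n - 1)" g a x M, OF Km2 gm gix K2i K2b]
  have rhs_eq: "integral {a..x} (\<lambda>t. g t * integral {t..x} (\<lambda>s. (s - t) powr (n - 1)))
      = integral {a..x} (\<lambda>t. g t * integral {t..x} (\<lambda>s. (x - s) powr (n - 1)))"
    by (rule integral_cong) (simp add: kint kint2)
  define G where "G s = integral {a..s} g" for s
  have Gc: "continuous_on {a..x} G"
    unfolding G_def by (rule indefinite_integral_continuous_1) (use gix set_lebesgue_integral_eq_integral(1) in blast)
  have F2l: "(\<lambda>s. integral {a..s} (\<lambda>t. (x - s) powr (n - 1) * g t)) = (\<lambda>s. (x - s) powr (n - 1) * G s)"
    by (simp add: G_def fun_eq_iff)
  have RLint_eq: "\<And>s. s \<in> {a..x} \<Longrightarrow> (1 / Gamma n) * integral {a..s} (\<lambda>t. (s - t) powr (n - 1) * g t) = RL_left_L1 a n h s"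
    using RLeq ax by auto
  show RLi: "RL_left_L1 a n h integrable_on {a..x}"
    by (rule integrable_eq[OF integrable_on_mult_right[OF F1(1)] RLint_eq])
  have "integral {a..x} (RL_left_L1 a n h) = integral {a..x} (\<lambda>s. (1 / Gamma n) * integral {a..s} (\<lambda>t. (s - t) powr (n - 1) * g t))"
    by (rule integral_cong) (rule RLint_eq[symmetric])
  also have "\<dots> = (1 / Gamma n) * integral {a..x} (\<lambda>s. (x - s) powr (n - 1) * G s)"
    using F1(2) F2(2) rhs_eq F2l by simp
  finally have I1: "integral {a..x} (RL_left_L1 a n h) = (1 / Gamma n) * integral {a..x} (\<lambda>s. (x - s) powr (n - 1) * G s)" .
  have cF': "continuous_on {a..x} F" using continuous_on_subset[OF cF] ax by auto
  have iG: "(\<lambda>s. (x - s) powr (n - 1) * G s) integrable_on {a..x}"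
    using cont_absint_mult2[OF Gc kl_absint[OF n(1)]] set_lebesgue_integral_eq_integral(1) by blast
  have iF: "(\<lambda>s. (x - s) powr (n - 1) * F s) integrable_on {a..x}"
    using cont_absint_mult2[OF cF' kl_absint[OF n(1)]] set_lebesgue_integral_eq_integral(1) by blast
  define A where "A = A_dist a b h F"
  have Hc: "continuous_on {a..b} (\<lambda>s. integral {a..s} h - F s)"
    using indefinite_integral_continuous_1[of h a b] hi set_lebesgue_integral_eq_integral(1) cF
    by (auto intro!: continuous_intros)
  have GA: "\<bar>G s - F s\<bar> \<le> A" if s: "s \<in> {a..x}" for s
  proof -
    have sb: "s \<in> {a..b}" using s ax by auto
    have "G s = integral {a..s} h" unfolding G_def using Heq[OF sb] by simp
    then show ?thesis unfolding A_def using A_dist_ge[OF Hc sb] by simp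
  qed
  have A0: "0 \<le> A" using GA[of a] ax by (smt (verit) atLeastAtMost_iff)
  have "\<bar>integral {a..x} (\<lambda>s. (x - s) powr (n - 1) * G s) - integral {a..x} (\<lambda>s. (x - s) powr (n - 1) * F s)\<bar>
      = \<bar>integral {a..x} (\<lambda>s. (x - s) powr (n - 1) * (G s - F s))\<bar>"
    using integral_diff[OF iG iF] by (simp add: right_diff_distrib)
  also have "\<dots> \<le> integral {a..x} (\<lambda>s. A * (x - s) powr (n - 1))"
  proof -
    have "norm (integral {a..x} (\<lambda>s. (x - s) powr (n - 1) * (G s - F s))) \<le> integral {a..x} (\<lambda>s. A * (x - s) powr (n - 1))"
    proof (rule Henstock_Kurzweil_Integration.integral_norm_bound_integral)
      show "(\<lambda>s. (x - s) powr (n - 1) * (G s - F s)) integrable_on {a..x}"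
        using integrable_diff[OF iG iF] by (simp add: right_diff_distrib)
      show "(\<lambda>s. A * (x - s) powr (n - 1)) integrable_on {a..x}"
        using kl_has_integral[OF n(1) ax(1)] by (intro integrable_on_mult_right) (auto simp: integrable_on_def)
      fix s assume s: "s \<in> {a..x}"
      show "norm ((x - s) powr (n - 1) * (G s - F s)) \<le> A * (x - s) powr (n - 1)"
      proof -
        have "(x - s) powr (n - 1) * \<bar>G s - F s\<bar> \<le> (x - s) powr (n - 1) * A"
          by (rule mult_left_mono[OF GA[OF s]]) simp
        then show ?thesis by (simp add: abs_mult mult.commute)
      qed
    qed
    then show ?thesis by simp
  qed
  also have "\<dots> = A * ((x - a) powr n / n)"
    using integral_unique[OF kl_has_integral[OF n(1) ax(1)]] by simp
  also have "\<dots> \<le> A * ((b - a) powr n / n)"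
    using A0 ax n by (intro mult_left_mono divide_right_mono powr_mono2) auto
  finally have D: "\<bar>integral {a..x} (\<lambda>s. (x - s) powr (n - 1) * G s) - integral {a..x} (\<lambda>s. (x - s) powr (n - 1) * F s)\<bar>
     \<le> A * ((b - a) powr n / n)" .
  have gp: "Gamma n > 0" using n by (intro Gamma_pos)
  have "\<bar>integral {a..x} (RL_left_L1 a n h) - (1 / Gamma n) * integral {a..x} (\<lambda>t. (x - t) powr (n - 1) * F t)\<bar>
      = (1 / Gamma n) * \<bar>integral {a..x} (\<lambda>s. (x - s) powr (n - 1) * G s) - integral {a..x} (\<lambda>s. (x - s) powr (n - 1) * F s)\<bar>"
    unfolding I1 right_diff_distrib[symmetric] abs_mult using gp by simp
  also have "\<dots> \<le> (1 / Gamma n) * (A * ((b - a) powr n / n))"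
    using D gp by (intro mult_left_mono) auto
  also have "\<dots> = (b - a) powr n / (n * Gamma n) * A_dist a b h F"
    by (simp add: A_def field_simps)
  finally show "\<bar>integral {a..x} (RL_left_L1 a n h) - (1 / Gamma n) * integral {a..x} (\<lambda>t. (x - t) powr (n - 1) * F t)\<bar>
         \<le> (b - a) powr n / (n * Gamma n) * A_dist a b h F" .
qed

lemma poly_seq:
  fixes F :: "real \<Rightarrow> real"
  assumes ab: "a \<le> b" and cF: "continuous_on {a..b} F" and Fa: "F a = 0"
  obtains fs where "\<And>k. continuous_on UNIV (fs k)"
    "\<And>k x. x \<in> {a..b} \<Longrightarrow> \<bar>integral {a..x} (fs k) - F x\<bar> \<le> 2 / (real k + 1)"
proof -
  have "\<forall>k. \<exists>p. polynomial_function p \<and> (\<forall>x\<in>{a..b}. norm (F x - p x) < 1 / (real k + 1))"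
    using Stone_Weierstrass_polynomial_function[OF compact_Icc cF] by simp
  then have "\<exists>P. \<forall>k. polynomial_function (P k) \<and> (\<forall>x\<in>{a..b}. norm (F x - P k x) < 1 / (real k + 1))"
    by (rule choice)
  then obtain P where P0: "\<forall>k. polynomial_function (P k) \<and> (\<forall>x\<in>{a..b}. norm (F x - P k x) < 1 / (real k + 1))"
    by blast
  have P: "\<And>k. polynomial_function (P k)"
    "\<And>k x. x \<in> {a..b} \<Longrightarrow> \<bar>F x - P k x\<bar> < 1 / (real k + 1)" using P0 by auto
  have "\<forall>k. \<exists>p'. real_polynomial_function p' \<and> (\<forall>x. (P k has_real_derivative p' x) (at x))"
    using has_real_derivative_polynomial_function P(1) real_polynomial_function_eq by metis
  then have "\<exists>P'. \<forall>k. real_polynomial_function (P' k) \<and> (\<forall>x. (P k has_real_derivative P' k x) (at x))"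
    by (rule choice)
  then obtain P' where P'0: "\<forall>k. real_polynomial_function (P' k) \<and> (\<forall>x. (P k has_real_derivative P' k x) (at x))"
    by blast
  have P': "\<And>k. real_polynomial_function (P' k)"
    "\<And>k x. (P k has_real_derivative P' k x) (at x)" using P'0 by auto
  show ?thesis
  proof (rule that[of P'])
    fix k
    show "continuous_on UNIV (P' k)"
      using P'(1) continuous_on_polymonial_function real_polynomial_function_eq by blast
    fix x assume x: "x \<in> {a..b}"
    have "integral {a..x} (P' k) = P k x - P k a"
    proof (rule integral_unique, rule fundamental_theorem_of_calculus)
      show "a \<le> x" using x by auto
      fix y show "(P k has_vector_derivative P' k y) (at y within {a..x})"
        using P'(2)[of k y] by (simp add: has_real_derivative_iff_has_vector_derivative has_vector_derivative_at_within)
    qed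
    moreover have "\<bar>F x - P k x\<bar> < 1 / (real k + 1)" using P(2) x by blast
    moreover have "\<bar>F a - P k a\<bar> < 1 / (real k + 1)" using P(2) ab by auto
    ultimately show "\<bar>integral {a..x} (P' k) - F x\<bar> \<le> 2 / (real k + 1)"
      using Fa by (simp add: abs_if split: if_splits) linarith?
  qed
qed

lemma lim_2k: "(\<lambda>k. 2 / (real k + 1)) \<longlonglongrightarrow> (0::real)"
proof -
  have "(\<lambda>k. 2 * inverse (real (Suc k))) \<longlonglongrightarrow> (0::real)"
    using tendsto_mult_right_zero[OF LIMSEQ_inverse_real_of_nat, of 2] .
  then show ?thesis by (simp add: divide_inverse add.commute)
qed

lemma frac_prim_eq:
  fixes F :: "real \<Rightarrow> real"
  assumes n: "0 < n" "n < 1" and ab: "a \<le> b" and cF: "continuous_on {a..b} F" and Fa: "F a = 0"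
  shows "RL_left_frac_prim a b n F
       = (\<lambda>x. if x \<in> {a..b} then (1 / Gamma n) * integral {a..x} (\<lambda>t. (x - t) powr (n - 1) * F t) else 0)"
proof -
  define G0 where "G0 = (\<lambda>x. if x \<in> {a..b} then (1 / Gamma n) * integral {a..x} (\<lambda>t. (x - t) powr (n - 1) * F t) else 0)"
  define C where "C = (b - a) powr n / (n * Gamma n)"
  have gp: "Gamma n > 0" using n by (intro Gamma_pos)
  have C0: "C \<ge> 0" unfolding C_def using gp n by auto
  have est: "\<bar>integral {a..x} (RL_left_L1 a n h) - G0 x\<bar> \<le> C * A_dist a b h F"
    if "h absolutely_integrable_on {a..b}" "x \<in> {a..b}" for h x
    using KE(2)[OF n ab that(1) cF that(2)] that(2) by (simp add: G0_def C_def)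
  have Phic: "continuous_on {a..b} (\<lambda>x. integral {a..x} (RL_left_L1 a n h))"
    if "h absolutely_integrable_on {a..b}" for h
    by (rule indefinite_integral_continuous_1, rule KE(1)[OF n ab that cF]) (use ab in auto)
  obtain fs where fsc: "\<And>k. continuous_on UNIV (fs k)"
    and fsb: "\<And>k x. x \<in> {a..b} \<Longrightarrow> \<bar>integral {a..x} (fs k) - F x\<bar> \<le> 2 / (real k + 1)"
    using poly_seq[OF ab cF Fa] by blast
  have fsi: "fs k absolutely_integrable_on {a..b}" for k
    by (rule absolutely_integrable_continuous_real, rule continuous_on_subset[OF fsc]) auto
  have abne: "{a..b} \<noteq> {}" using ab by auto
  have fsA: "A_dist a b (fs k) F \<le> 2 / (real k + 1)" for k
    unfolding A_dist_def by (rule cSUP_least[OF abne fsb])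
  have fsA0: "(\<lambda>k. A_dist a b (fs k) F) \<longlonglongrightarrow> 0"
    unfolding A_dist_def by (rule sup_tendsto0[OF abne _ fsb lim_2k]) auto
  have seq: "(\<lambda>k. A_dist a b (RL_left_L1 a n (gs k)) G0) \<longlonglongrightarrow> 0"
    if gsi: "\<forall>k. gs k absolutely_integrable_on {a..b}" and gsA: "(\<lambda>k. A_dist a b (gs k) F) \<longlonglongrightarrow> 0" for gs
    unfolding A_dist_def
  proof (rule sup_tendsto0[OF abne])
    show "\<And>k x. x \<in> {a..b} \<Longrightarrow> 0 \<le> \<bar>integral {a..x} (RL_left_L1 a n (gs k)) - G0 x\<bar>" by simp
    show "\<And>k x. x \<in> {a..b} \<Longrightarrow> \<bar>integral {a..x} (RL_left_L1 a n (gs k)) - G0 x\<bar> \<le> C * A_dist a b (gs k) F"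
      using est gsi by blast
    show "(\<lambda>k. C * A_dist a b (gs k) F) \<longlonglongrightarrow> 0"
      using tendsto_mult_right_zero[OF gsA] .
  qed
  have G0c: "continuous_on {a..b} G0"
  proof (rule uniform_limit_theorem)
    show "\<forall>\<^sub>F k in sequentially. continuous_on {a..b} (\<lambda>x. integral {a..x} (RL_left_L1 a n (fs k)))"
      using Phic[OF fsi] by simp
    show "uniform_limit {a..b} (\<lambda>k x. integral {a..x} (RL_left_L1 a n (fs k))) G0 sequentially"
    proof (rule uniform_limitI)
      fix e :: real assume e: "e > 0"
      have lim: "(\<lambda>k. C * (2 / (real k + 1))) \<longlonglongrightarrow> 0" using tendsto_mult_right_zero[OF lim_2k] .
      have "\<forall>\<^sub>F k in sequentially. C * (2 / (real k + 1)) < e" using order_tendstoD(2)[OF lim e] .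
      then show "\<forall>\<^sub>F k in sequentially. \<forall>x\<in>{a..b}. dist (integral {a..x} (RL_left_L1 a n (fs k))) (G0 x) < e"
      proof eventually_elim
        case (elim k)
        show ?case
        proof
          fix x assume x: "x \<in> {a..b}"
          have "dist (integral {a..x} (RL_left_L1 a n (fs k))) (G0 x) \<le> C * A_dist a b (fs k) F"
            using est[OF fsi x] by (simp add: dist_real_def)
          also have "\<dots> \<le> C * (2 / (real k + 1))" using fsA C0 by (intro mult_left_mono) auto
          finally show "dist (integral {a..x} (RL_left_L1 a n (fs k))) (G0 x) < e" using elim by linarith
        qed
      qed
    qed
  qed simp
  have G0a: "G0 a = 0" using ab by (simp add: G0_def)
  have G0o: "\<forall>x. x \<notin> {a..b} \<longrightarrow> G0 x = 0" by (simp add: G0_def)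
  have uniq: "G = G0" if G: "continuous_on {a..b} G \<and> G a = 0 \<and> (\<forall>x. x \<notin> {a..b} \<longrightarrow> G x = 0) \<and>
         (\<forall>fs :: nat \<Rightarrow> real \<Rightarrow> real.
            (\<forall>k. fs k absolutely_integrable_on {a..b}) \<and> (\<lambda>k. A_dist a b (fs k) F) \<longlonglongrightarrow> 0
            \<longrightarrow> (\<lambda>k. A_dist a b (RL_left_L1 a n (fs k)) G) \<longlonglongrightarrow> 0)" for G
  proof
    fix x
    show "G x = G0 x"
    proof (cases "x \<in> {a..b}")
      case False
      then show ?thesis using G G0o by auto
    next
      case True
      have Gc: "continuous_on {a..b} G" using G by blast
      have lG: "(\<lambda>k. A_dist a b (RL_left_L1 a n (fs k)) G) \<longlonglongrightarrow> 0" using G fsi fsA0 by blast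
      have lG0: "(\<lambda>k. A_dist a b (RL_left_L1 a n (fs k)) G0) \<longlonglongrightarrow> 0" using seq fsi fsA0 by blast
      have bnd: "\<bar>G x - G0 x\<bar> \<le> A_dist a b (RL_left_L1 a n (fs k)) G + A_dist a b (RL_left_L1 a n (fs k)) G0" for k
      proof -
        have c1: "continuous_on {a..b} (\<lambda>x. integral {a..x} (RL_left_L1 a n (fs k)) - G x)"
          using Phic[OF fsi] Gc by (intro continuous_intros)
        have c2: "continuous_on {a..b} (\<lambda>x. integral {a..x} (RL_left_L1 a n (fs k)) - G0 x)"
          using Phic[OF fsi] G0c by (intro continuous_intros)
        show ?thesis using A_dist_ge[OF c1 True] A_dist_ge[OF c2 True] by linarith
      qed
      have "\<bar>G x - G0 x\<bar> \<le> 0"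
        using tendsto_add[OF lG lG0] bnd by (intro LIMSEQ_le_const) auto
      then show ?thesis by simp
    qed
  qed
  have PG0: "continuous_on {a..b} G0 \<and> G0 a = 0 \<and> (\<forall>x. x \<notin> {a..b} \<longrightarrow> G0 x = 0) \<and>
         (\<forall>fs :: nat \<Rightarrow> real \<Rightarrow> real.
            (\<forall>k. fs k absolutely_integrable_on {a..b}) \<and> (\<lambda>k. A_dist a b (fs k) F) \<longlonglongrightarrow> 0
            \<longrightarrow> (\<lambda>k. A_dist a b (RL_left_L1 a n (fs k)) G0) \<longlonglongrightarrow> 0)"
    using G0c G0a G0o seq by blast
  show ?thesis
    unfolding RL_left_frac_prim_def G0_def[symmetric]
    apply (rule the_equality)
     apply (rule PG0)
    apply (erule uniq)
    done
qed

lemma main_nlt1: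
  fixes F \<psi> \<psi>' :: "real \<Rightarrow> real"
  assumes ab: "a \<le> b" and n: "0 < n" "n < 1" and cF: "continuous_on {a..b} F" and Fa: "F a = 0"
    and d: "\<And>t. (\<psi> has_real_derivative \<psi>' t) (at t)" and c': "continuous_on UNIV \<psi>'"
  shows "RL_left a b n F \<psi> = - integral {a..b} (\<lambda>t. F t * Rm b n \<psi>' t)"
proof -
  define Fc where "Fc t = F (max a (min t b))" for t
  have cFc: "continuous_on UNIV Fc" unfolding Fc_def by (rule clamp_cont[OF ab cF])
  have FcF: "Fc t = F t" if "t \<in> {a..b}" for t using that by (simp add: Fc_def)
  have dv: "deriv \<psi> x = \<psi>' x" for x using d by (rule DERIV_imp_deriv)
  have "RL_left a b n F \<psi> = - integral {a..b} (\<lambda>x. RL_left_frac_prim a b n F x * \<psi>' x)"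
    using n by (simp add: RL_left_def hk_dist_def dv)
  also have "integral {a..b} (\<lambda>x. RL_left_frac_prim a b n F x * \<psi>' x)
      = integral {a..b} (\<lambda>x. (1 / Gamma n) * (integral {a..x} (\<lambda>t. (x - t) powr (n - 1) * Fc t) * \<psi>' x))"
  proof (rule integral_cong)
    fix x assume x: "x \<in> {a..b}"
    have "integral {a..x} (\<lambda>t. (x - t) powr (n - 1) * F t) = integral {a..x} (\<lambda>t. (x - t) powr (n - 1) * Fc t)"
      by (rule integral_cong) (use x in \<open>auto simp: FcF\<close>)
    then show "RL_left_frac_prim a b n F x * \<psi>' x = (1 / Gamma n) * (integral {a..x} (\<lambda>t. (x - t) powr (n - 1) * Fc t) * \<psi>' x)"
      using x by (simp add: frac_prim_eq[OF n ab cF Fa])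
  qed
  also have "\<dots> = (1 / Gamma n) * integral {a..b} (\<lambda>x. integral {a..x} (\<lambda>t. (x - t) powr (n - 1) * Fc t) * \<psi>' x)"
    by simp
  also have "integral {a..b} (\<lambda>x. integral {a..x} (\<lambda>t. (x - t) powr (n - 1) * Fc t) * \<psi>' x)
      = integral {a..b} (\<lambda>t. Fc t * integral {t..b} (\<lambda>x. (x - t) powr (n - 1) * \<psi>' x))"
    by (rule fub_inst(2)[OF n(1) c' cFc])
  also have "(1 / Gamma n) * \<dots> = integral {a..b} (\<lambda>t. F t * Rm b n \<psi>' t)"
  proof -
    have "integral {a..b} (\<lambda>t. F t * Rm b n \<psi>' t)
        = integral {a..b} (\<lambda>t. (1 / Gamma n) * (Fc t * integral {t..b} (\<lambda>x. (x - t) powr (n - 1) * \<psi>' x)))"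
      by (rule integral_cong) (simp add: Rm_def FcF)
    then show ?thesis by simp
  qed
  finally show ?thesis .
qed

theorem lemma4p7:
  fixes a b n :: real and F \<phi> :: "real \<Rightarrow> real" and j :: nat
  assumes "a < b" and "0 < n"
    and "continuous_on {a..b} F" and "F a = 0"
    and "test_fun a b \<phi>"
  shows "dist_deriv j (RL_left a b n F) \<phi>
           = (-1) ^ j * hk_int a b F ((deriv ^^ j) (RL_right b n \<phi>))"
proof -
  have ab: "a \<le> b" using assms(1) by simp
  have n: "0 < n" by fact
  have cF: "continuous_on {a..b} F" and Fa: "F a = 0" by fact+
  have diff: "\<And>k x. (deriv ^^ k) \<phi> differentiable (at x)"
    using assms(5) unfolding test_fun_def by blast
  obtain c d where cd: "a < c" "d < b" and supp: "\<And>x. x \<notin> {c..d} \<Longrightarrow> \<phi> x = 0"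
    using assms(5) unfolding test_fun_def by blast
  define D where "D k = (deriv ^^ k) \<phi>" for k
  have DS: "D (Suc k) = deriv (D k)" for k by (simp add: D_def)
  have Dd: "(D k has_real_derivative D (Suc k) x) (at x)" for k x
    using diff[of k x] unfolding DS D_def by (simp add: DERIV_deriv_iff_real_differentiable)
  have Dc: "continuous_on UNIV (D k)" for k
    using Dd by (meson DERIV_continuous continuous_at_imp_continuous_on)
  have Dz: "D k x = 0" if "x \<notin> {c..d}" for k x
    using that
  proof (induction k arbitrary: x)
    case 0
    then show ?case using supp by (simp add: D_def)
  next
    case (Suc k)
    obtain S where S: "open S" "x \<in> S" "S \<inter> {c..d} = {}"
    proof (cases "x < c")
      case True
      show ?thesis by (rule that[of "{..<c}"]) (use True in auto)
    next
      case False
      then have "x > d" using Suc.prems by auto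
      show ?thesis by (rule that[of "{d<..}"]) (use \<open>x > d\<close> in auto)
    qed
    have "((\<lambda>y. 0) has_real_derivative 0) (at x)" by simp
    then have "(D k has_real_derivative 0) (at x)"
    proof (rule has_field_derivative_transform_within_open[OF _ S(1) S(2)])
      fix y assume "y \<in> S"
      then have "y \<notin> {c..d}" using S(3) by blast
      then show "0 = D k y" using Suc.IH by simp
    qed
    then show ?case using Dd[of k x] DERIV_unique by blast
  qed
  have Db: "D k b = 0" for k using Dz cd by auto
  have RR: "(deriv ^^ k) (RL_right b n \<phi>) = Rm b n (D k)" for k
  proof (induction k)
    case 0
    then show ?case by (simp add: D_def fun_eq_iff RL_right_Rm)
  next
    case (Suc k)
    have "(deriv ^^ Suc k) (RL_right b n \<phi>) = deriv (Rm b n (D k))" using Suc by simp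
    also have "\<dots> = Rm b n (D (Suc k))"
    proof
      fix x
      show "deriv (Rm b n (D k)) x = Rm b n (D (Suc k)) x"
        by (rule DERIV_imp_deriv, rule Rm_deriv[OF n Dd Dd Dc Db Db])
    qed
    finally show ?case .
  qed
  have Rd: "(Rm b n (D k) has_real_derivative Rm b n (D (Suc k)) x) (at x)" for k x
    by (rule Rm_deriv[OF n Dd Dd Dc Db Db])
  have Rc: "continuous_on UNIV (Rm b n (D k))" for k
    using Rd by (meson DERIV_continuous continuous_at_imp_continuous_on)
  have Rb: "Rm b n \<psi> b = 0" for \<psi> by (simp add: Rm_def)
  have rs: "rs_integral F (Rm b n (D j)) a b = integral {a..b} (\<lambda>t. F t * Rm b n (D (Suc j)) t)"
  proof (rule rs_integral_eq, rule rs_has_integral_deriv[OF ab cF])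
    show "Rm b n (D (Suc j)) absolutely_integrable_on {a..b}"
      by (rule absolutely_integrable_continuous_real, rule continuous_on_subset[OF Rc]) auto
    fix p q :: real assume pq0: "a \<le> p" and pq: "p \<le> q" and pq2: "q \<le> b"
    show "(Rm b n (D (Suc j)) has_integral Rm b n (D j) q - Rm b n (D j) p) {p..q}"
    proof (rule fundamental_theorem_of_calculus[OF pq])
      fix x show "(Rm b n (D j) has_vector_derivative Rm b n (D (Suc j)) x) (at x within {p..q})"
        using Rd[of j x] by (simp add: has_real_derivative_iff_has_vector_derivative has_vector_derivative_at_within)
    qed
  qed
  have hk: "hk_int a b F ((deriv ^^ j) (RL_right b n \<phi>)) = - integral {a..b} (\<lambda>t. F t * Rm b n (D (Suc j)) t)"
    unfolding RR hk_int_def rs using Fa Rb by simp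
  have main: "RL_left a b n F (D j) = - integral {a..b} (\<lambda>t. F t * Rm b n (D (Suc j)) t)"
  proof -
    consider "n < 1" | "n = 1" | "n > 1" by linarith
    then show ?thesis
    proof cases
      case 1
      then show ?thesis using main_nlt1[where \<psi>="D j" and \<psi>'="D (Suc j)" and F=F and a=a and b=b, OF ab n 1 cF Fa Dd[of j] Dc[of "Suc j"]] by simp
    next
      case 2
      then show ?thesis using main_n1[where \<psi>="D j" and \<psi>'="D (Suc j)" and F=F and a=a and b=b, OF ab Dd[of j] Db[of j] Fa] by simp
    next
      case 3
      then show ?thesis using main_ngt1[where \<psi>="D j" and \<psi>'="D (Suc j)" and F=F and a=a and b=b, OF ab 3 cF Fa Dd[of j] Dc[of "Suc j"] Db[of j]] by simp
    qed
  qed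
  have "dist_deriv j (RL_left a b n F) \<phi> = (-1) ^ j * RL_left a b n F (D j)"
    by (simp add: dist_deriv_def D_def)
  then show ?thesis unfolding hk main by simp
qed

end
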